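(* Let $m\ge1$, let $r$ be a rational number with $0\le r<1$, let $k$ be an integer with $1\le k\le m$, and let $\Lambda$ be an antichain in $\mathbb{B}(2m)$ with $\lfloor r k\rfloor+1\le\min_{\lambda\in\Lambda}\rho(\lambda)$. Let $D_0$ be the set of minimal elements (with respect to inclusion) of the family $\bigcup_{\lambda\in\Lambda}\{d\in\mathbb{B}(2m): d\subseteq\lambda,\ \rho(d)=\rho(\lambda)-\lfloor rk\rfloor\}$. For $D\subseteq D_0$ write $W_D=\bigvee_{d\in D}d$. Then \[ \bigl|\mathring{\mathbf{I}}_{r,k}(\mathbb{B}(2m),\Lambda)\bigr|=\binom{m}{k}2^k+\sum_{\substack{D\subseteq D_0\\ |D|>0}}(-1)^{|D|}\sum_{j=0}^{k}\binom{\rho(W_D\vee -W_D)-\rho(W_D)}{j}\binom{m-\tfrac12\rho(W_D\vee-W_D)}{k-j}2^{k-j}. \]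
   Context: For a positive integer $m$, $\pm[1,m]=\{-m,\dots,-1,1,\dots,m\}$. $\mathbb{B}(2m)$ is the Boolean lattice of all subsets of $\pm[1,m]$, with meet $\wedge=\cap$, join $\vee=\cup$, least element $\hat0=\emptyset$, and rank $\rho(b)=|b|$. For $b\in\mathbb{B}(2m)$, $-b=\{-x: x\in b\}$. For $r$, $k$, $\Lambda$ as in the claim, $\mathring{\mathbf{I}}_{r,k}(\mathbb{B}(2m),\Lambda)=\{b\in\mathbb{B}(2m): \rho(b)=k,\ b\wedge -b=\hat0,\ \rho(b\wedge\lambda)>r\cdot k\ \text{for all }\lambda\in\Lambda\}$ (the relatively $r$-blocking $k$-elements for $\Lambda$ containing no pair $\{x,-x\}$). Binomial coefficients $\binom{n}{j}$ are $0$ when $j>n$ or $j<0$. *)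

theory Defs
  imports Complex_Main
begin

definition pmset :: "nat \<Rightarrow> int set" where
  "pmset m = {x. x \<noteq> 0 \<and> \<bar>x\<bar> \<le> int m}"

text \<open>Elements of the Boolean lattice B(2m): all subsets of pmset m.\<close>
definition BL :: "nat \<Rightarrow> int set set" where
  "BL m = Pow (pmset m)"

definition negset :: "int set \<Rightarrow> int set" where
  "negset b = uminus ` b"

definition antichain_in :: "int set set \<Rightarrow> bool" where
  "antichain_in \<Lambda> \<longleftrightarrow> (\<forall>a\<in>\<Lambda>. \<forall>b\<in>\<Lambda>. a \<subseteq> b \<longrightarrow> a = b)"

definition Iring :: "rat \<Rightarrow> nat \<Rightarrow> nat \<Rightarrow> int set set \<Rightarrow> int set set" where
  "Iring r k m \<Lambda> = {b \<in> BL m. card b = k \<and> b \<inter> negset b = {} \<and>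
      (\<forall>l\<in>\<Lambda>. of_nat (card (b \<inter> l)) > r * of_nat k)}"

definition Dfam :: "rat \<Rightarrow> nat \<Rightarrow> nat \<Rightarrow> int set set \<Rightarrow> int set set" where
  "Dfam r k m \<Lambda> = (\<Union>l\<in>\<Lambda>. {d \<in> BL m. d \<subseteq> l \<and>
      card d = card l - nat \<lfloor>r * of_nat k\<rfloor>})"

definition minimal_elems :: "int set set \<Rightarrow> int set set" where
  "minimal_elems F = {d \<in> F. \<not> (\<exists>e\<in>F. e \<subset> d)}"

definition D0 :: "rat \<Rightarrow> nat \<Rightarrow> nat \<Rightarrow> int set set \<Rightarrow> int set set" where
  "D0 r k m \<Lambda> = minimal_elems (Dfam r k m \<Lambda>)"

end

theory Submission
  imports Defs
begin


lemma negset_simp[simp]: "x \<in> negset b \<longleftrightarrow> -x \<in> b"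
  unfolding negset_def by force

lemma card_negset: "card (negset b) = card b"
  unfolding negset_def by (simp add: card_image)

lemma finite_negset[simp]: "finite (negset b) = finite b"
  unfolding negset_def by (simp add: finite_image_iff inj_on_def)

lemma Nlemma:
  fixes P :: "int set"
  assumes fin: "finite P" and pos: "\<forall>x\<in>P. x > 0"
  shows "card {B. B \<subseteq> P \<union> negset P \<and> B \<inter> negset B = {} \<and> card B = t} = (card P choose t) * 2^t"
proof -
  define Ts where "Ts = {T. T \<subseteq> P \<and> card T = t}"
  define Sg where "Sg = Sigma Ts Pow"
  define tg where "tg = {B. B \<subseteq> P \<union> negset P \<and> B \<inter> negset B = {} \<and> card B = t}"
  define psi where "psi = (\<lambda>(T,S). S \<union> negset (T - (S::int set)))"
  define phi where "phi = (\<lambda>B::int set. (abs ` B, B \<inter> {x. x > 0}))"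
  have finTs: "finite Ts" unfolding Ts_def using fin by simp
  have 1: "\<forall>a\<in>Sg. phi (psi a) = a"
  proof
    fix a assume "a \<in> Sg"
    then obtain T S where a: "a = (T,S)" "T \<subseteq> P" "S \<subseteq> T" unfolding Sg_def Ts_def by auto
    have eq1: "abs ` (S \<union> negset (T - S)) = T"
    proof
      have ab: "\<forall>x\<in>T. \<bar>x\<bar> = x" using a(2) pos by (metis abs_of_pos subsetD)
      show "abs ` (S \<union> negset (T - S)) \<subseteq> T" using a ab by (force simp: negset_def)
      show "T \<subseteq> abs ` (S \<union> negset (T - S))"
      proof
        fix x assume "x \<in> T"
        then have "x > 0" using a pos by auto
        show "x \<in> abs ` (S \<union> negset (T - S))"
        proof (cases "x \<in> S")
          case True then show ?thesis using \<open>x>0\<close> by (auto intro!: image_eqI[where x=x])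
        next
          case False then show ?thesis using \<open>x>0\<close> \<open>x \<in> T\<close> by (auto intro!: image_eqI[where x="-x"])
        qed
      qed
    qed
    have Tp: "\<forall>x\<in>T. x > 0" using a pos by blast
    have "(S \<union> negset (T - S)) \<inter> {x. x > 0} = S" using a Tp by force
    with eq1 show "phi (psi a) = a" unfolding phi_def psi_def a by simp
  qed
  have 2: "\<forall>B\<in>tg. psi (phi B) = B"
  proof
    fix B assume "B \<in> tg"
    then have B: "B \<subseteq> P \<union> negset P" "B \<inter> negset B = {}" unfolding tg_def by auto
    have nz: "\<forall>x\<in>B. x \<noteq> 0" using B(1) pos by force
    have "(B \<inter> {x. x>0}) \<union> negset (abs`B - B \<inter> {x. x>0}) = B"
    proof
      show "(B \<inter> {x. x>0}) \<union> negset (abs`B - B \<inter> {x. x>0}) \<subseteq> B"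
      proof
        fix x assume "x \<in> (B \<inter> {x. x>0}) \<union> negset (abs`B - B \<inter> {x. x>0})"
        then show "x \<in> B"
        proof (cases "x \<in> B")
          case False
          with \<open>x \<in> _\<close> have "-x \<in> abs ` B" "-x \<notin> B \<inter> {x. x>0}" by auto
          then obtain y where "y \<in> B" "-x = \<bar>y\<bar>" "-x \<notin> B \<inter> {x. x>0}" by blast
          then show ?thesis using nz by (cases "y > 0") auto
        qed simp
      qed
      show "B \<subseteq> (B \<inter> {x. x>0}) \<union> negset (abs`B - B \<inter> {x. x>0})"
      proof
        fix x assume x: "x \<in> B"
        show "x \<in> (B \<inter> {x. x>0}) \<union> negset (abs`B - B \<inter> {x. x>0})"
        proof (cases "x > 0")
          case False
          then have "x < 0" using nz x by force
          have "-x \<notin> B" using B(2) x by auto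
          moreover have "-x \<in> abs ` B" using x \<open>x<0\<close> by (auto intro!: image_eqI[where x=x])
          ultimately show ?thesis by auto
        qed (use x in auto)
      qed
    qed
    then show "psi (phi B) = B" unfolding psi_def phi_def by simp
  qed
  have 3: "psi ` Sg \<subseteq> tg"
  proof
    fix B assume "B \<in> psi ` Sg"
    then obtain T S where a: "B = psi (T,S)" "T \<subseteq> P" "S \<subseteq> T" "card T = t" unfolding Sg_def Ts_def by auto
    have fT: "finite T" using a fin finite_subset by auto
    have Tp: "\<forall>x\<in>T. x > 0" using a pos by blast
    have fS: "finite S" using fT a(3) finite_subset by blast
    have dj: "S \<inter> negset (T - S) = {}"
    proof (rule ccontr)
      assume "S \<inter> negset (T - S) \<noteq> {}"
      then obtain x where "x \<in> S" "-x \<in> T" by auto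
      then have "x > 0" "-x > 0" using Tp a(3) by blast+
      then show False by linarith
    qed
    have "card B = card S + card (negset (T - S))" unfolding a psi_def
      using card_Un_disjoint[OF fS _ dj] fT by simp
    also have "\<dots> = card T" using card_negset fT a card_mono[OF fT a(3)] by (simp add: card_Diff_subset finite_subset)
    finally have "card B = t" using a by simp
    moreover have "B \<subseteq> P \<union> negset P" using a unfolding psi_def by auto
    moreover have "B \<inter> negset B = {}"
    proof (rule ccontr)
      assume "B \<inter> negset B \<noteq> {}"
      then obtain x where "x \<in> B" "-x \<in> B" by auto
      then have x: "(x\<in>S \<or> (-x\<in>T \<and> -x\<notin>S)) \<and> (-x\<in>S \<or> (x\<in>T \<and> x\<notin>S))"
        using a(1) unfolding psi_def by simp
      have "x \<in> T \<longrightarrow> x > 0" "-x \<in> T \<longrightarrow> -x > 0" "x \<in> S \<longrightarrow> x \<in> T" "-x \<in> S \<longrightarrow> -x \<in> T"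
        using Tp a(3) by blast+
      with x show False by linarith
    qed
    ultimately show "B \<in> tg" unfolding tg_def by simp
  qed
  have 4: "phi ` tg \<subseteq> Sg"
  proof
    fix a assume "a \<in> phi ` tg"
    then obtain B where a: "a = phi B" "B \<subseteq> P \<union> negset P" "B \<inter> negset B = {}" "card B = t"
      unfolding tg_def by auto
    have "inj_on abs B"
    proof (rule inj_onI)
      fix x y assume "x \<in> B" "y \<in> B" "\<bar>x\<bar> = \<bar>y\<bar>"
      then show "x = y" using a(3) by (auto simp: abs_if split: if_splits)
    qed
    then have "card (abs ` B) = t" using a(4) by (simp add: card_image)
    moreover have "abs ` B \<subseteq> P"
    proof
      fix y assume "y \<in> abs ` B"
      then obtain x where x: "x \<in> B" "y = \<bar>x\<bar>" by blast
      then have "x \<in> P \<or> -x \<in> P" using a(2) by auto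
      then show "y \<in> P"
      proof
        assume "x \<in> P" then have "x > 0" using pos by blast
        then show ?thesis using x \<open>x \<in> P\<close> by simp
      next
        assume "-x \<in> P" then have "-x > 0" using pos by blast
        then show ?thesis using x \<open>-x \<in> P\<close> by simp
      qed
    qed
    moreover have "B \<inter> {x. x > 0} \<subseteq> abs ` B" by force
    ultimately show "a \<in> Sg" unfolding a Sg_def Ts_def phi_def by auto
  qed
  have "bij_betw psi Sg tg" by (rule bij_betw_byWitness[OF 1 2 3 4])
  then have "card tg = card Sg" by (simp add: bij_betw_same_card)
  also have "\<dots> = (\<Sum>T\<in>Ts. card (Pow T))" unfolding Sg_def
    by (rule card_SigmaI) (use finTs fin finite_subset in \<open>auto simp: Ts_def\<close>)
  also have "\<dots> = (\<Sum>T\<in>Ts. 2^t)"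
  proof (rule sum.cong[OF refl])
    fix T assume "T \<in> Ts"
    then have "finite T" "card T = t" using fin finite_subset unfolding Ts_def by auto
    then show "card (Pow T) = 2^t" by (simp add: card_Pow)
  qed
  also have "\<dots> = (card P choose t) * 2^t" unfolding Ts_def using n_subsets[OF fin] by simp
  finally show ?thesis unfolding tg_def .
qed



lemma finite_pmset[simp]: "finite (pmset m)"
  by (rule finite_subset[of _ "{-int m..int m}"]) (auto simp: pmset_def)

lemma posmem:
  fixes A :: "int set"
  assumes "\<forall>y\<in>A. y > 0" "x \<noteq> 0"
  shows "\<bar>x\<bar> \<in> A \<longleftrightarrow> x \<in> A \<or> -x \<in> A"
proof (cases "x > 0")
  case True
  then have "-x \<notin> A" using assms(1) by force
  then show ?thesis using True by simp
next
  case False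
  then have "x \<notin> A" using assms(1) by force
  then show ?thesis using False by simp
qed

lemma count_lemma:
  fixes W :: "int set"
  assumes Wsub: "W \<subseteq> pmset m"
  shows "card {b \<in> BL m. card b = k \<and> b \<inter> negset b = {} \<and> b \<inter> W = {}} =
    (\<Sum>j = 0..k. ((card (W \<union> negset W) - card W) choose j) *
          ((m - card (W \<union> negset W) div 2) choose (k - j)) * 2 ^ (k - j))"
proof -
  define H where "H = negset W - W"
  define A where "A = abs ` W"
  define P where "P = {1..int m} - A"
  define F where "F = P \<union> negset P"
  have finW: "finite W" by (rule finite_subset[OF Wsub]) (rule finite_pmset)
  have finH: "finite H" unfolding H_def using finW by simp
  have finA: "finite A" unfolding A_def using finW by simp
  have finP: "finite P" unfolding P_def by simp
  have finF: "finite F" unfolding F_def using finP by simp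
  have nzW: "0 \<notin> W" using Wsub by (auto simp: pmset_def)
  have Apos: "\<forall>x\<in>A. x > 0" unfolding A_def using nzW by force
  have Ppos: "\<forall>x\<in>P. x > 0" unfolding P_def by auto
  have A_sub: "A \<subseteq> {1..int m}" unfolding A_def using Wsub by (force simp: pmset_def)
  have absA: "\<bar>x\<bar> \<in> A \<longleftrightarrow> x \<in> W \<or> -x \<in> W" for x
  proof -
    have "\<bar>x\<bar> \<in> A \<longleftrightarrow> (\<exists>w\<in>W. x = w \<or> x = -w)" unfolding A_def image_iff abs_eq_iff by auto
    also have "\<dots> \<longleftrightarrow> x \<in> W \<or> -x \<in> W" by (metis minus_minus)
    finally show ?thesis .
  qed
  have c1: "card (W \<union> negset W) = card W + card H"
  proof -
    have "W \<union> negset W = W \<union> H" unfolding H_def by auto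
    then show ?thesis using finW finH card_Un_disjoint[of W H] unfolding H_def by auto
  qed
  have c2: "card (W \<union> negset W) = 2 * card A"
  proof -
    have "W \<union> negset W = A \<union> negset A"
    proof (rule set_eqI)
      fix x
      show "x \<in> W \<union> negset W \<longleftrightarrow> x \<in> A \<union> negset A"
      proof (cases "x = 0")
        case True then show ?thesis using nzW Apos by auto
      next
        case False
        have "x \<in> W \<union> negset W \<longleftrightarrow> \<bar>x\<bar> \<in> A" using absA by simp
        also have "\<dots> \<longleftrightarrow> x \<in> A \<union> negset A" using posmem[OF Apos False] by simp
        finally show ?thesis .
      qed
    qed
    moreover have "A \<inter> negset A = {}"
    proof (rule ccontr)
      assume "A \<inter> negset A \<noteq> {}"
      then obtain x where "x \<in> A" "-x \<in> A" by auto
      then have "x > 0" "-x > 0" using Apos by blast+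
      then show False by linarith
    qed
    ultimately show ?thesis using card_Un_disjoint[of A "negset A"] finA card_negset by simp
  qed
  have cH: "card H = card (W \<union> negset W) - card W" using c1 by simp
  have cP: "card P = m - card (W \<union> negset W) div 2"
  proof -
    have "card P = card {1..int m} - card A" unfolding P_def using A_sub finA by (simp add: card_Diff_subset)
    then show ?thesis using c2 by simp
  qed
  have dec: "pmset m - W = H \<union> F"
  proof
    show "pmset m - W \<subseteq> H \<union> F"
    proof
      fix x assume x: "x \<in> pmset m - W"
      show "x \<in> H \<union> F"
      proof (cases "-x \<in> W")
        case True then show ?thesis using x unfolding H_def by auto
      next
        case False
        then have "\<bar>x\<bar> \<notin> A" using absA x by auto
        moreover have "\<bar>x\<bar> \<in> {1..int m}" using x by (auto simp: pmset_def)
        ultimately have "\<bar>x\<bar> \<in> P" unfolding P_def by auto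
        then show ?thesis unfolding F_def by (cases "x > 0") auto
      qed
    qed
    show "H \<union> F \<subseteq> pmset m - W"
    proof
      fix x assume x: "x \<in> H \<union> F"
      then show "x \<in> pmset m - W"
      proof
        assume "x \<in> H"
        then show ?thesis using Wsub unfolding H_def by (auto simp: pmset_def)
      next
        assume "x \<in> F"
        then consider "x \<in> P" | "-x \<in> P" unfolding F_def by auto
        then show ?thesis
        proof cases
          case 1 then have h: "\<bar>x\<bar> \<notin> A" "x \<ge> 1" "x \<le> int m" unfolding P_def by auto
          then have "x \<notin> W" using absA[of x] by blast
          then show ?thesis using h(2,3) by (auto simp: pmset_def)
        next
          case 2 then have h: "\<bar>-x\<bar> \<notin> A" "-x \<ge> 1" "-x \<le> int m" unfolding P_def by auto
          then have "x \<notin> W" using absA[of "-x"] by simp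
          then show ?thesis using h(2,3) by (auto simp: pmset_def)
        qed
      qed
    qed
  qed
  have HF: "H \<inter> F = {}"
  proof -
    have "x \<notin> F" if "x \<in> H" for x
    proof -
      have "\<bar>x\<bar> \<in> A" using that absA unfolding H_def by auto
      then have "x \<notin> P" "-x \<notin> P" unfolding P_def by (auto simp: abs_if split: if_splits)
      then show ?thesis unfolding F_def by auto
    qed
    then show ?thesis by auto
  qed
  have Hna: "H \<inter> negset H = {}" unfolding H_def by auto
  have Fsym: "\<And>x. x \<in> F \<Longrightarrow> -x \<in> F" unfolding F_def by auto
  define tg where "tg = {b. b \<subseteq> H \<union> F \<and> b \<inter> negset b = {} \<and> card b = k}"
  have tg_eq: "{b \<in> BL m. card b = k \<and> b \<inter> negset b = {} \<and> b \<inter> W = {}} = tg"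
  proof -
    have "\<And>b. (b \<subseteq> pmset m \<and> b \<inter> W = {}) \<longleftrightarrow> b \<subseteq> H \<union> F" using dec by blast
    then show ?thesis unfolding tg_def BL_def by blast
  qed
  define Xs where "Xs = {X. X \<subseteq> H \<and> card X \<le> k}"
  define Sg where "Sg = Sigma Xs (\<lambda>X. {Y. Y \<subseteq> P \<union> negset P \<and> Y \<inter> negset Y = {} \<and> card Y = k - card X})"
  have finXs: "finite Xs" unfolding Xs_def using finH by simp
  have bij: "bij_betw (\<lambda>(X,Y). X \<union> Y) Sg tg"
  proof (rule bij_betw_byWitness[where f'="\<lambda>b. (b \<inter> H, b \<inter> F)"])
    show "\<forall>a\<in>Sg. (\<lambda>b. (b \<inter> H, b \<inter> F)) ((\<lambda>(X, Y). X \<union> Y) a) = a"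
      using HF unfolding Sg_def Xs_def F_def by auto
    show "\<forall>a'\<in>tg. (\<lambda>(X, Y). X \<union> Y) ((\<lambda>b. (b \<inter> H, b \<inter> F)) a') = a'"
      unfolding tg_def by auto
    show "(\<lambda>(X, Y). X \<union> Y) ` Sg \<subseteq> tg"
    proof
      fix b assume "b \<in> (\<lambda>(X, Y). X \<union> Y) ` Sg"
      then obtain X Y where b: "b = X \<union> Y" "X \<subseteq> H" "card X \<le> k" "Y \<subseteq> F"
        "Y \<inter> negset Y = {}" "card Y = k - card X"
        unfolding Sg_def Xs_def F_def by auto
      have "card b = card X + card Y" unfolding b(1)
        by (rule card_Un_disjoint) (use b finH finF finite_subset HF in auto)
      then have "card b = k" using b by simp
      moreover have "b \<inter> negset b = {}"
      proof -
        have nU: "negset (X \<union> Y) = negset X \<union> negset Y" unfolding negset_def by auto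
        have n1: "X \<inter> negset X = {}"
        proof (rule ccontr)
          assume "X \<inter> negset X \<noteq> {}"
          then obtain x where "x \<in> X" "-x \<in> X" by auto
          then have "x \<in> H" "-x \<in> H" using b(2) by blast+
          then show False using Hna by (metis IntI empty_iff negset_simp)
        qed
        have n2: "X \<inter> negset Y = {}"
        proof (rule ccontr)
          assume "X \<inter> negset Y \<noteq> {}"
          then obtain x where "x \<in> X" "-x \<in> Y" by auto
          then have "x \<in> H" "-x \<in> F" using b(2,4) by blast+
          then show False using HF Fsym by (metis IntI empty_iff minus_minus)
        qed
        have n3: "Y \<inter> negset X = {}"
        proof (rule ccontr)
          assume "Y \<inter> negset X \<noteq> {}"
          then obtain x where "x \<in> Y" "-x \<in> X" by auto
          then have "x \<in> F" "-x \<in> H" using b(2,4) by blast+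
          then show False using HF Fsym by (metis IntI empty_iff)
        qed
        show ?thesis unfolding b(1) nU Int_Un_distrib Int_Un_distrib2
          by (simp only: n1 n2 n3 b(5) Un_empty_left)
      qed
      ultimately show "b \<in> tg" unfolding tg_def using b by auto
    qed
    show "(\<lambda>b. (b \<inter> H, b \<inter> F)) ` tg \<subseteq> Sg"
    proof
      fix a assume "a \<in> (\<lambda>b. (b \<inter> H, b \<inter> F)) ` tg"
      then obtain b where a: "a = (b \<inter> H, b \<inter> F)" "b \<subseteq> H \<union> F" "b \<inter> negset b = {}" "card b = k"
        unfolding tg_def by auto
      have "finite b" using a finH finF finite_subset by auto
      have "card b = card (b \<inter> H) + card (b \<inter> F)"
      proof -
        have "b = (b \<inter> H) \<union> (b \<inter> F)" using a by auto
        then show ?thesis using card_Un_disjoint[of "b \<inter> H" "b \<inter> F"] \<open>finite b\<close> HF by auto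
      qed
      then have "card (b \<inter> H) \<le> k" "card (b \<inter> F) = k - card (b \<inter> H)" using a by auto
      moreover have "(b \<inter> F) \<inter> negset (b \<inter> F) = {}" using a by auto
      ultimately show "a \<in> Sg" unfolding Sg_def Xs_def a(1) F_def by auto
    qed
  qed
  have "card tg = card Sg" using bij by (simp add: bij_betw_same_card)
  also have "\<dots> = (\<Sum>X\<in>Xs. card {Y. Y \<subseteq> P \<union> negset P \<and> Y \<inter> negset Y = {} \<and> card Y = k - card X})"
    unfolding Sg_def by (rule card_SigmaI) (use finXs finP in \<open>auto intro: finite_subset\<close>)
  also have "\<dots> = (\<Sum>X\<in>Xs. (card P choose (k - card X)) * 2 ^ (k - card X))"
    using Nlemma[OF finP Ppos] by simp
  also have "\<dots> = (\<Sum>j\<in>{0..k}. \<Sum>X\<in>{X \<in> Xs. card X = j}. (card P choose (k - card X)) * 2 ^ (k - card X))"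
    by (rule sum.group[symmetric]) (use finXs in \<open>auto simp: Xs_def\<close>)
  also have "\<dots> = (\<Sum>j\<in>{0..k}. (card H choose j) * ((card P choose (k - j)) * 2 ^ (k - j)))"
  proof (rule sum.cong[OF refl])
    fix j assume "j \<in> {0..k}"
    then have "{X \<in> Xs. card X = j} = {X. X \<subseteq> H \<and> card X = j}" unfolding Xs_def by auto
    then show "(\<Sum>X\<in>{X \<in> Xs. card X = j}. (card P choose (k - card X)) * 2 ^ (k - card X)) =
      (card H choose j) * ((card P choose (k - j)) * 2 ^ (k - j))"
      using n_subsets[OF finH, of j] by simp
  qed
  finally show ?thesis unfolding tg_eq cH cP by (simp add: mult.assoc)
qed



lemma blocking:
  fixes r :: rat and k m :: nat and \<Lambda> :: "int set set" and b :: "int set"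
  assumes Lsub: "\<Lambda> \<subseteq> BL m" and r0: "0 \<le> r" and bsub: "b \<subseteq> pmset m"
  shows "(\<forall>l\<in>\<Lambda>. of_nat (card (b \<inter> l)) > r * of_nat k) \<longleftrightarrow> (\<forall>d\<in>D0 r k m \<Lambda>. b \<inter> d \<noteq> {})"
proof -
  define f where "f = nat \<lfloor>r * of_nat k\<rfloor>"
  have fl0: "\<lfloor>r * of_nat k\<rfloor> \<ge> 0" using r0 by simp
  have ff: "int f = \<lfloor>r * of_nat k\<rfloor>" unfolding f_def using fl0 by simp
  have finl: "finite l" if "l \<in> \<Lambda>" for l
    using that Lsub finite_subset[OF _ finite_pmset] unfolding BL_def by blast
  have finF: "finite (Dfam r k m \<Lambda>)"
    by (rule finite_subset[of _ "BL m"]) (auto simp: Dfam_def BL_def)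
  show ?thesis
  proof
    assume H: "\<forall>l\<in>\<Lambda>. of_nat (card (b \<inter> l)) > r * of_nat k"
    show "\<forall>d\<in>D0 r k m \<Lambda>. b \<inter> d \<noteq> {}"
    proof (intro ballI notI)
      fix d assume d: "d \<in> D0 r k m \<Lambda>" and bd: "b \<inter> d = {}"
      then obtain l where l: "l \<in> \<Lambda>" "d \<subseteq> l" "card d = card l - f"
        unfolding D0_def minimal_elems_def Dfam_def f_def by auto
      have "b \<inter> l \<subseteq> l - d" using bd by auto
      then have "card (b \<inter> l) \<le> card (l - d)" using finl[OF l(1)] by (simp add: card_mono)
      also have "\<dots> = card l - card d" using l finl[OF l(1)] by (simp add: card_Diff_subset finite_subset)
      also have "\<dots> \<le> f" using l(3) by simp
      finally have "card (b \<inter> l) \<le> f" .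
      then have "(of_nat (card (b \<inter> l)) :: rat) \<le> of_int \<lfloor>r * of_nat k\<rfloor>"
        using ff by (metis of_int_of_nat_eq of_nat_mono)
      also have "\<dots> \<le> r * of_nat k" by (rule of_int_floor_le)
      finally show False using H l(1) by force
    qed
  next
    assume H: "\<forall>d\<in>D0 r k m \<Lambda>. b \<inter> d \<noteq> {}"
    show "\<forall>l\<in>\<Lambda>. of_nat (card (b \<inter> l)) > r * of_nat k"
    proof (rule ballI, rule ccontr)
      fix l assume l: "l \<in> \<Lambda>" and nl: "\<not> of_nat (card (b \<inter> l)) > r * of_nat k"
      then have "of_int (int (card (b \<inter> l))) \<le> r * of_nat k" by simp
      then have "int (card (b \<inter> l)) \<le> \<lfloor>r * of_nat k\<rfloor>" by (simp only: le_floor_iff)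
      then have cbl: "card (b \<inter> l) \<le> f" using ff by linarith
      have fl: "finite l" using finl[OF l] .
      have "card (l - b) = card l - card (b \<inter> l)"
        using fl by (metis Int_commute card_Diff_subset_Int finite_Int Diff_Int2 Int_Diff Diff_Int_distrib card_Diff_subset inf_le1 finite_subset)
      then have "card l - f \<le> card (l - b)" using cbl by simp
      then obtain d where d: "d \<subseteq> l - b" "card d = card l - f"
        using obtain_subset_with_card_n by metis
      have lsub: "l \<subseteq> pmset m" using l Lsub unfolding BL_def by auto
      have dF: "d \<in> Dfam r k m \<Lambda>" unfolding Dfam_def BL_def f_def[symmetric]
        using d l lsub by auto
      obtain e where e: "e \<in> Dfam r k m \<Lambda>" "e \<subseteq> d" "\<forall>x\<in>Dfam r k m \<Lambda>. x \<subseteq> e \<longrightarrow> e = x"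
        using finite_has_minimal2[OF finF dF] by auto
      have "e \<in> D0 r k m \<Lambda>" unfolding D0_def minimal_elems_def using e by auto
      moreover have "b \<inter> e = {}" using e(2) d(1) by auto
      ultimately show False using H by auto
    qed
  qed
qed



theorem mainTheorem4:
  fixes m k :: nat and r :: rat and \<Lambda> :: "int set set"
  assumes "m \<ge> 1"
    and "0 \<le> r" and "r < 1"
    and "1 \<le> k" and "k \<le> m"
    and "\<Lambda> \<subseteq> BL m" and "antichain_in \<Lambda>"
    and "\<forall>l\<in>\<Lambda>. \<lfloor>r * of_nat k\<rfloor> + 1 \<le> int (card l)"
  shows "int (card (Iring r k m \<Lambda>)) =
    int (m choose k) * 2 ^ k +
    (\<Sum>D \<in> {D. D \<subseteq> D0 r k m \<Lambda> \<and> card D > 0}.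
       (-1) ^ card D *
       (\<Sum>j = 0..k.
          int ((card (\<Union>D \<union> negset (\<Union>D)) - card (\<Union>D)) choose j) *
          int ((m - card (\<Union>D \<union> negset (\<Union>D)) div 2) choose (k - j)) *
          2 ^ (k - j)))"
proof -
  define U0 where "U0 = {b \<in> BL m. card b = k \<and> b \<inter> negset b = {}}"
  define G where "G = (\<lambda>d::int set. {b \<in> U0. b \<inter> d = {}})"
  define D0' where "D0' = D0 r k m \<Lambda>"
  define cnt where "cnt = (\<lambda>W::int set. (\<Sum>j = 0..k.
          int ((card (W \<union> negset W) - card W) choose j) *
          int ((m - card (W \<union> negset W) div 2) choose (k - j)) * 2 ^ (k - j)))"
  have finU0: "finite U0" unfolding U0_def BL_def by simp
  have D0sub: "D0' \<subseteq> BL m" unfolding D0'_def D0_def minimal_elems_def Dfam_def by auto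
  have finD0: "finite D0'" by (rule finite_subset[OF D0sub]) (simp add: BL_def)
  have cnt_eq: "int (card {b \<in> U0. b \<inter> W = {}}) = cnt W" if "W \<subseteq> pmset m" for W
  proof -
    have "{b \<in> U0. b \<inter> W = {}} = {b \<in> BL m. card b = k \<and> b \<inter> negset b = {} \<and> b \<inter> W = {}}"
      unfolding U0_def by auto
    then show ?thesis unfolding cnt_def using count_lemma[OF that, of k] by simp
  qed
  have cardU0: "int (card U0) = int (m choose k) * 2 ^ k"
  proof -
    have "int (card U0) = cnt {}" using cnt_eq[of "{}"] by simp
    also have "\<dots> = (\<Sum>j = 0..k. int (0 choose j) * int (m choose (k - j)) * 2 ^ (k - j))"
      unfolding cnt_def by (simp add: negset_def)
    also have "\<dots> = int (m choose k) * 2 ^ k"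
      by (simp add: sum.atLeast_Suc_atMost) (intro sum.neutral, auto)
    finally show ?thesis .
  qed
  have Ir: "Iring r k m \<Lambda> = U0 - (\<Union>d\<in>D0'. G d)"
  proof -
    have "b \<in> Iring r k m \<Lambda> \<longleftrightarrow> b \<in> U0 - (\<Union>d\<in>D0'. G d)" for b
    proof (cases "b \<in> U0")
      case True
      then have "b \<subseteq> pmset m" unfolding U0_def BL_def by auto
      from blocking[OF assms(6) assms(2) this, of k] True show ?thesis
        unfolding Iring_def U0_def G_def D0'_def by auto
    next
      case False then show ?thesis unfolding Iring_def U0_def by auto
    qed
    then show ?thesis by blast
  qed
  have IE: "int (card ((\<Union>d\<in>D0'. G d) \<inter> U0)) =
      (\<Sum>B | B \<subseteq> D0' \<and> B \<noteq> {}. (-1) ^ (card B + 1) * int (card (\<Inter> (G ` B) \<inter> U0)))"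
  proof (rule Incl_Excl_UN[where f="\<lambda>S. int (card (S \<inter> U0))", OF _ finD0])
    fix S T :: "int set set" assume "disjnt S T"
    then have dj: "(S \<inter> U0) \<inter> (T \<inter> U0) = {}" by (auto simp: disjnt_def)
    have eq: "(S \<union> T) \<inter> U0 = (S \<inter> U0) \<union> (T \<inter> U0)" by auto
    have "card ((S \<union> T) \<inter> U0) = card (S \<inter> U0) + card (T \<inter> U0)"
      unfolding eq by (rule card_Un_disjoint) (use finU0 dj in auto)
    then show "int (card ((S \<union> T) \<inter> U0)) = int (card (S \<inter> U0)) + int (card (T \<inter> U0))"
      by simp
  qed
  have sub: "(\<Union>d\<in>D0'. G d) \<subseteq> U0" unfolding G_def by auto
  have "int (card (Iring r k m \<Lambda>)) = int (card U0) - int (card (\<Union>d\<in>D0'. G d))"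
    unfolding Ir using sub finU0 by (simp add: card_Diff_subset finite_subset of_nat_diff card_mono)
  also have "int (card (\<Union>d\<in>D0'. G d)) = int (card ((\<Union>d\<in>D0'. G d) \<inter> U0))"
    using sub by (simp add: Int_absorb2)
  also have "\<dots> = (\<Sum>B | B \<subseteq> D0' \<and> B \<noteq> {}. (-1) ^ (card B + 1) * cnt (\<Union>B))"
    unfolding IE
  proof (rule sum.cong[OF refl])
    fix B assume B: "B \<in> {B. B \<subseteq> D0' \<and> B \<noteq> {}}"
    have "\<Inter> (G ` B) \<inter> U0 = {b \<in> U0. b \<inter> \<Union>B = {}}" using B unfolding G_def by auto
    moreover have "\<Union>B \<subseteq> pmset m" using B D0sub unfolding BL_def by auto
    ultimately show "(-1) ^ (card B + 1) * int (card (\<Inter> (G ` B) \<inter> U0)) = (-1) ^ (card B + 1) * cnt (\<Union>B)"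
      using cnt_eq by simp
  qed
  finally have "int (card (Iring r k m \<Lambda>)) = int (m choose k) * 2 ^ k +
      (\<Sum>B | B \<subseteq> D0' \<and> B \<noteq> {}. (-1) ^ card B * cnt (\<Union>B))"
    unfolding cardU0 by (simp add: sum_negf[symmetric])
  moreover have "{D. D \<subseteq> D0' \<and> card D > 0} = {B. B \<subseteq> D0' \<and> B \<noteq> {}}"
    using finD0 by (auto simp: card_gt_0_iff intro: finite_subset)
  ultimately show ?thesis unfolding cnt_def D0'_def by simp
qed

end
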